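(* Let $X=(X^{(1)},\dots,X^{(p)})\in\mathbb{R}^p$ be a random vector with finite second moments and strictly positive definite covariance matrix, let $\epsilon$ be a random variable with $E(\epsilon)=0$, $\mathrm{var}(\epsilon)=\sigma^2>0$, uncorrelated with $X^{(1)},\dots,X^{(p)}$, and let $Y=\delta+\sum_{j=1}^p\beta_jX^{(j)}+\epsilon$ with $\delta\in\mathbb{R}$, $\beta\in\mathbb{R}^p$. Suppose the distribution of $(X,Y)$ is partially faithful. Then the population PC-simple algorithm identifies the active set: $\mathcal{A}^{[m_{\mathrm{reach}}]}=\mathcal{A}=\{j=1,\dots,p;\ \beta_j\neq 0\}$.
   Context: $\rho(Z^{(1)},Z^{(2)}\mid W)$ denotes the population partial correlation; $X^{(\mathcal{S})}=\{X^{(j)};j\in\mathcal{S}\}$, $\{j\}^C=\{1,\dots,p\}\setminus\{j\}$. Partial faithfulness: for every $j$, if $\rho(Y,X^{(j)}\mid X^{(\mathcal{S})})=0$ for some $\mathcal{S}\subseteq\{j\}^C$ then $\rho(Y,X^{(j)}\mid X^{(\{j\}^C)})=0$. Population PC-simple algorithm: set $m=1$ and $\mathcal{A}^{[1]}=\{j:\mathrm{cor}(Y,X^{(j)})\neq 0\}$. Repeat: $m\leftarrow m+1$, $\mathcal{A}^{[m]}=\{j\in\mathcal{A}^{[m-1]}:\rho(Y,X^{(j)}\mid X^{(\mathcal{S})})\neq 0$ for all $\mathcal{S}\subseteq\mathcal{A}^{[m-1]}\setminus\{j\}$ with $|\mathcal{S}|=m-1\}$; until $|\mathcal{A}^{[m]}|\le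 m$. Define $m_{\mathrm{reach}}=\min\{m:|\mathcal{A}^{[m]}|\le m\}$. *)

theory Defs
  imports "HOL-Probability.Probability"
begin

text \<open>Population covariance and correlation (correlation is 0 if a variance vanishes,
  by the convention x / 0 = 0).\<close>

definition covar :: "'a measure \<Rightarrow> ('a \<Rightarrow> real) \<Rightarrow> ('a \<Rightarrow> real) \<Rightarrow> real" where
  "covar M U V = (\<integral>\<omega>. (U \<omega> - (\<integral>x. U x \<partial>M)) * (V \<omega> - (\<integral>x. V x \<partial>M)) \<partial>M)"

definition corr :: "'a measure \<Rightarrow> ('a \<Rightarrow> real) \<Rightarrow> ('a \<Rightarrow> real) \<Rightarrow> real" where
  "corr M U V = covar M U V / sqrt (covar M U U * covar M V V)"

definition lin_resid :: "'a measure \<Rightarrow> ('a \<Rightarrow> real) \<Rightarrow> (nat \<Rightarrow> 'a \<Rightarrow> real) \<Rightarrow> nat set \<Rightarrow> 'a \<Rightarrow> real" where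
  "lin_resid M Z W S =
    (let ab = (SOME (a, b). \<forall>a' b'.
              (\<integral>\<omega>. (Z \<omega> - a - (\<Sum>k\<in>S. b k * W k \<omega>))\<^sup>2 \<partial>M)
              \<le> (\<integral>\<omega>. (Z \<omega> - a' - (\<Sum>k\<in>S. b' k * W k \<omega>))\<^sup>2 \<partial>M))
     in (\<lambda>\<omega>. Z \<omega> - fst ab - (\<Sum>k\<in>S. snd ab k * W k \<omega>)))"

definition pcor :: "'a measure \<Rightarrow> ('a \<Rightarrow> real) \<Rightarrow> ('a \<Rightarrow> real) \<Rightarrow> (nat \<Rightarrow> 'a \<Rightarrow> real) \<Rightarrow> nat set \<Rightarrow> real" where
  "pcor M Z1 Z2 W S = corr M (lin_resid M Z1 W S) (lin_resid M Z2 W S)"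

definition partially_faithful :: "'a measure \<Rightarrow> ('a \<Rightarrow> real) \<Rightarrow> (nat \<Rightarrow> 'a \<Rightarrow> real) \<Rightarrow> nat \<Rightarrow> bool" where
  "partially_faithful M Y X p \<longleftrightarrow>
    (\<forall>j\<in>{1..p}. (\<exists>S. S \<subseteq> {1..p} - {j} \<and> pcor M Y (X j) X S = 0)
        \<longrightarrow> pcor M Y (X j) X ({1..p} - {j}) = 0)"

text \<open>Population PC-simple algorithm: pc_A M Y X p m is A^[m] for m \<ge> 1
  (index 0 is an unused dummy).\<close>

fun pc_A :: "'a measure \<Rightarrow> ('a \<Rightarrow> real) \<Rightarrow> (nat \<Rightarrow> 'a \<Rightarrow> real) \<Rightarrow> nat \<Rightarrow> nat \<Rightarrow> nat set" where
  "pc_A M Y X p 0 = {1..p}"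
| "pc_A M Y X p (Suc 0) = {j\<in>{1..p}. corr M Y (X j) \<noteq> 0}"
| "pc_A M Y X p (Suc (Suc m)) =
     {j \<in> pc_A M Y X p (Suc m). \<forall>S. S \<subseteq> pc_A M Y X p (Suc m) - {j} \<and> card S = Suc m
        \<longrightarrow> pcor M Y (X j) X S \<noteq> 0}"

definition m_reach :: "'a measure \<Rightarrow> ('a \<Rightarrow> real) \<Rightarrow> (nat \<Rightarrow> 'a \<Rightarrow> real) \<Rightarrow> nat \<Rightarrow> nat" where
  "m_reach M Y X p = (LEAST m. 1 \<le> m \<and> card (pc_A M Y X p m) \<le> m)"

end

theory Submission
  imports Defs
begin


definition L2 :: "'a measure \<Rightarrow> ('a \<Rightarrow> real) \<Rightarrow> bool" where
  "L2 M f \<longleftrightarrow> f \<in> borel_measurable M \<and> integrable M (\<lambda>x. (f x)\<^sup>2)"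

context prob_space begin

lemma L2_meas: "L2 M f \<Longrightarrow> f \<in> borel_measurable M" by (simp add: L2_def)

lemma L2_int: "L2 M f \<Longrightarrow> integrable M f"
  unfolding L2_def by (auto intro: square_integrable_imp_integrable)

lemma L2_sqint: "L2 M f \<Longrightarrow> integrable M (\<lambda>x. (f x)\<^sup>2)" by (simp add: L2_def)

lemma L2_mult: assumes "L2 M f" "L2 M g" shows "integrable M (\<lambda>x. f x * g x)"
proof (rule Bochner_Integration.integrable_bound[where f="\<lambda>x. (f x)\<^sup>2 + (g x)\<^sup>2"])
  show "integrable M (\<lambda>x. (f x)\<^sup>2 + (g x)\<^sup>2)" using assms by (simp add: L2_def)
  show "(\<lambda>x. f x * g x) \<in> borel_measurable M" using assms by (simp add: L2_def borel_measurable_times)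
  have "\<And>x. \<bar>f x * g x\<bar> \<le> \<bar>(f x)\<^sup>2 + (g x)\<^sup>2\<bar>"
  proof -
    fix x
    have "0 \<le> (\<bar>f x\<bar> - \<bar>g x\<bar>)\<^sup>2" by simp
    hence "2 * (\<bar>f x\<bar> * \<bar>g x\<bar>) \<le> (f x)\<^sup>2 + (g x)\<^sup>2"
      by (simp add: power2_eq_square algebra_simps)
    moreover have "0 \<le> \<bar>f x\<bar> * \<bar>g x\<bar>" by simp
    moreover have "\<bar>f x * g x\<bar> = \<bar>f x\<bar> * \<bar>g x\<bar>" by (rule abs_mult)
    moreover have "\<bar>(f x)\<^sup>2 + (g x)\<^sup>2\<bar> = (f x)\<^sup>2 + (g x)\<^sup>2" by simp
    ultimately show "\<bar>f x * g x\<bar> \<le> \<bar>(f x)\<^sup>2 + (g x)\<^sup>2\<bar>" by linarith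
  qed
  then show "AE x in M. norm (f x * g x) \<le> norm ((f x)\<^sup>2 + (g x)\<^sup>2)" by simp
qed

lemma L2_add: assumes "L2 M f" "L2 M g" shows "L2 M (\<lambda>x. f x + g x)"
proof -
  have "integrable M (\<lambda>x. (f x)\<^sup>2 + 2 * (f x * g x) + (g x)\<^sup>2)"
    using assms L2_mult by (simp add: L2_def)
  moreover have "(\<lambda>x. (f x + g x)\<^sup>2) = (\<lambda>x. (f x)\<^sup>2 + 2 * (f x * g x) + (g x)\<^sup>2)"
    by (simp add: power2_eq_square algebra_simps)
  ultimately show ?thesis using assms by (simp add: L2_def borel_measurable_add)
qed

lemma L2_cmult: assumes "L2 M f" shows "L2 M (\<lambda>x. c * f x)"
proof -
  have "(\<lambda>x. (c * f x)\<^sup>2) = (\<lambda>x. c\<^sup>2 * (f x)\<^sup>2)" by (simp add: power_mult_distrib)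
  thus ?thesis using assms by (simp add: L2_def borel_measurable_times)
qed

lemma L2_const: "L2 M (\<lambda>x. c)" by (simp add: L2_def)

lemma L2_uminus: assumes "L2 M f" shows "L2 M (\<lambda>x. - f x)"
  using L2_cmult[OF assms, of "-1"] by simp

lemma L2_diff: assumes "L2 M f" "L2 M g" shows "L2 M (\<lambda>x. f x - g x)"
  using L2_add[OF assms(1) L2_uminus[OF assms(2)]] by simp

lemma L2_sum: assumes "finite S" "\<And>k. k \<in> S \<Longrightarrow> L2 M (f k)"
  shows "L2 M (\<lambda>x. \<Sum>k\<in>S. f k x)"
  using assms by (induction S rule: finite_induct) (auto intro: L2_add L2_const)

lemma L2_lin: assumes "finite S" "\<And>k. k \<in> S \<Longrightarrow> L2 M (W k)" "L2 M Z"
  shows "L2 M (\<lambda>x. Z x - a - (\<Sum>k\<in>S. b k * W k x))"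
  by (intro L2_diff L2_sum L2_cmult L2_const assms)

lemma L2_aff: assumes "finite S" "\<And>k. k \<in> S \<Longrightarrow> L2 M (W k)"
  shows "L2 M (\<lambda>x. a + (\<Sum>k\<in>S. b k * W k x))"
  by (intro L2_add L2_sum L2_cmult L2_const assms)

end



definition orth :: "'a measure \<Rightarrow> ('a \<Rightarrow> real) \<Rightarrow> (nat \<Rightarrow> 'a \<Rightarrow> real) \<Rightarrow> nat set \<Rightarrow> bool" where
  "orth M r W S \<longleftrightarrow> (\<integral>x. r x \<partial>M) = 0 \<and> (\<forall>i\<in>S. (\<integral>x. r x * W i x \<partial>M) = 0)"

context prob_space begin

lemma int_aff:
  assumes "finite S" "\<And>k. k \<in> S \<Longrightarrow> L2 M (W k)" "L2 M U"
  shows "(\<integral>x. U x * (c + (\<Sum>k\<in>S. e k * W k x)) \<partial>M)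
     = c * (\<integral>x. U x \<partial>M) + (\<Sum>k\<in>S. e k * (\<integral>x. U x * W k x \<partial>M))"
proof -
  have "(\<lambda>x. U x * (c + (\<Sum>k\<in>S. e k * W k x))) = (\<lambda>x. c * U x + (\<Sum>k\<in>S. e k * (U x * W k x)))"
    by (simp add: algebra_simps sum_distrib_left)
  moreover have "integrable M (\<lambda>x. c * U x)" using assms L2_int by simp
  moreover have "\<And>k. k \<in> S \<Longrightarrow> integrable M (\<lambda>x. e k * (U x * W k x))"
    using assms L2_mult by simp
  ultimately show ?thesis by (simp add: integral_sum)
qed

lemma int_lin:
  assumes "finite S" "\<And>k. k \<in> S \<Longrightarrow> L2 M (W k)" "L2 M U" "L2 M Z"
  shows "(\<integral>x. U x * (Z x - a - (\<Sum>k\<in>S. b k * W k x)) \<partial>M)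
     = (\<integral>x. U x * Z x \<partial>M) - a * (\<integral>x. U x \<partial>M) - (\<Sum>k\<in>S. b k * (\<integral>x. U x * W k x \<partial>M))"
proof -
  have "(\<lambda>x. U x * (Z x - a - (\<Sum>k\<in>S. b k * W k x))) = (\<lambda>x. U x * Z x - (a * U x + (\<Sum>k\<in>S. b k * (U x * W k x))))"
    by (simp add: algebra_simps sum_distrib_left)
  moreover have "integrable M (\<lambda>x. a * U x)" using assms L2_int by simp
  moreover have "integrable M (\<lambda>x. U x * Z x)" using assms L2_mult by simp
  moreover have "\<And>k. k \<in> S \<Longrightarrow> integrable M (\<lambda>x. b k * (U x * W k x))"
    using assms L2_mult by simp
  ultimately show ?thesis by (simp add: integral_sum)
qed

lemma orth_aff:
  assumes "finite S" "\<And>k. k \<in> S \<Longrightarrow> L2 M (W k)" "L2 M r" "orth M r W S"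
  shows "(\<integral>x. r x * (c + (\<Sum>k\<in>S. e k * W k x)) \<partial>M) = 0"
  using int_aff[OF assms(1,2,3)] assms(4) by (simp add: orth_def)

lemma orth_exists:
  assumes "finite S" "\<And>k. k \<in> S \<Longrightarrow> L2 M (W k)" "L2 M Z"
  shows "\<exists>a b. orth M (\<lambda>x. Z x - a - (\<Sum>k\<in>S. b k * W k x)) W S"
  using assms
proof (induction S arbitrary: Z rule: finite_induct)
  case empty
  then show ?case using L2_int[OF empty(2)]
    by (intro exI[of _ "\<integral>x. Z x \<partial>M"]) (simp add: orth_def prob_space)
next
  case (insert k S)
  have WS: "\<And>i. i \<in> S \<Longrightarrow> L2 M (W i)" and Wk: "L2 M (W k)" using insert by auto
  obtain a1 b1 where o1: "orth M (\<lambda>x. Z x - a1 - (\<Sum>i\<in>S. b1 i * W i x)) W S"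
    using insert.IH[OF WS insert(5)] by blast
  obtain a2 b2 where o2: "orth M (\<lambda>x. W k x - a2 - (\<Sum>i\<in>S. b2 i * W i x)) W S"
    using insert.IH[OF WS Wk] by blast
  define r1 where "r1 = (\<lambda>x. Z x - a1 - (\<Sum>i\<in>S. b1 i * W i x))"
  define r2 where "r2 = (\<lambda>x. W k x - a2 - (\<Sum>i\<in>S. b2 i * W i x))"
  have L1: "L2 M r1" unfolding r1_def by (intro L2_lin insert WS)
  have L2': "L2 M r2" unfolding r2_def by (intro L2_lin insert WS Wk)
  define v where "v = (\<integral>x. (r2 x)\<^sup>2 \<partial>M)"
  define c where "c = (\<integral>x. r1 x * r2 x \<partial>M) / v"
  define r0 where "r0 = (\<lambda>x. r1 x - c * r2 x)"
  have L0: "L2 M r0" unfolding r0_def by (intro L2_diff L2_cmult L1 L2')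
  define a' where "a' = a1 - c * a2"
  define b' where "b' = (\<lambda>i. if i = k then c else b1 i - c * b2 i)"
  have pw: "(\<lambda>x. Z x - a' - (\<Sum>i\<in>insert k S. b' i * W i x)) = r0"
  proof
    fix x
    have "(\<Sum>i\<in>insert k S. b' i * W i x) = c * W k x + (\<Sum>i\<in>S. (b1 i - c * b2 i) * W i x)"
      using insert(1,2) by (simp add: b'_def) (intro sum.cong, auto)
    also have "(\<Sum>i\<in>S. (b1 i - c * b2 i) * W i x) = (\<Sum>i\<in>S. b1 i * W i x) - c * (\<Sum>i\<in>S. b2 i * W i x)"
      by (simp add: algebra_simps sum_subtractf sum_distrib_left)
    finally show "Z x - a' - (\<Sum>i\<in>insert k S. b' i * W i x) = r0 x"
      by (simp add: r0_def r1_def r2_def a'_def algebra_simps)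
  qed
  have i1: "integrable M r1" "integrable M r2" using L1 L2' L2_int by auto
  have mean0: "(\<integral>x. r0 x \<partial>M) = 0"
    using o1 o2 i1 unfolding r0_def by (simp add: orth_def r1_def[symmetric] r2_def[symmetric])
  have S0: "\<forall>i\<in>S. (\<integral>x. r0 x * W i x \<partial>M) = 0"
  proof
    fix i assume i: "i \<in> S"
    have "(\<lambda>x. r0 x * W i x) = (\<lambda>x. r1 x * W i x - c * (r2 x * W i x))"
      by (simp add: r0_def algebra_simps)
    moreover have "integrable M (\<lambda>x. r1 x * W i x)" "integrable M (\<lambda>x. r2 x * W i x)"
      using L2_mult L1 L2' WS i by auto
    ultimately show "(\<integral>x. r0 x * W i x \<partial>M) = 0"
      using o1 o2 i by (simp add: orth_def r1_def[symmetric] r2_def[symmetric])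
  qed
  have oS: "orth M r0 W S" using mean0 S0 by (simp add: orth_def)
  have "(\<integral>x. r0 x * W k x \<partial>M) = (\<integral>x. r0 x * r2 x \<partial>M) + (\<integral>x. r0 x * (a2 + (\<Sum>i\<in>S. b2 i * W i x)) \<partial>M)"
  proof -
    have "(\<lambda>x. r0 x * W k x) = (\<lambda>x. r0 x * r2 x + r0 x * (a2 + (\<Sum>i\<in>S. b2 i * W i x)))"
      by (simp add: r2_def algebra_simps)
    moreover have "integrable M (\<lambda>x. r0 x * r2 x)" using L0 L2' L2_mult by auto
    moreover have "integrable M (\<lambda>x. r0 x * (a2 + (\<Sum>i\<in>S. b2 i * W i x)))"
      by (intro L2_mult L0 L2_aff insert(1) WS)
    ultimately show ?thesis by simp
  qed
  also have "(\<integral>x. r0 x * (a2 + (\<Sum>i\<in>S. b2 i * W i x)) \<partial>M) = 0"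
    by (rule orth_aff[OF insert(1) WS L0 oS])
  also have "(\<integral>x. r0 x * r2 x \<partial>M) = (\<integral>x. r1 x * r2 x \<partial>M) - c * v"
  proof -
    have "(\<lambda>x. r0 x * r2 x) = (\<lambda>x. r1 x * r2 x - c * (r2 x)\<^sup>2)"
      by (simp add: r0_def algebra_simps power2_eq_square)
    moreover have "integrable M (\<lambda>x. r1 x * r2 x)" using L1 L2' L2_mult by auto
    moreover have "integrable M (\<lambda>x. (r2 x)\<^sup>2)" using L2' L2_sqint by auto
    ultimately show ?thesis by (simp add: v_def)
  qed
  also have "(\<integral>x. r1 x * r2 x \<partial>M) - c * v = 0"
  proof (cases "v = 0")
    case True
    have "AE x in M. (r2 x)\<^sup>2 = 0"
      using integral_nonneg_eq_0_iff_AE[of M "\<lambda>x. (r2 x)\<^sup>2"] L2' True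
      by (simp add: v_def L2_sqint)
    hence "AE x in M. r1 x * r2 x = 0" by auto
    hence "(\<integral>x. r1 x * r2 x \<partial>M) = (\<integral>x. 0 \<partial>M)"
      using L1 L2' by (intro integral_cong_AE) (auto simp: L2_meas borel_measurable_times)
    then show ?thesis using True by simp
  next
    case False
    then show ?thesis by (simp add: c_def)
  qed
  finally have k0: "(\<integral>x. r0 x * W k x \<partial>M) = 0" by simp
  have "orth M r0 W (insert k S)" using oS k0 by (simp add: orth_def)
  then show ?case using pw by metis
qed

end



context prob_space begin

lemma resid_AE:
  assumes S: "finite S" and W: "\<And>k. k \<in> S \<Longrightarrow> L2 M (W k)" and Z: "L2 M Z"
    and o: "orth M (\<lambda>x. Z x - a0 - (\<Sum>k\<in>S. b0 k * W k x)) W S"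
  shows "AE x in M. lin_resid M Z W S x = Z x - a0 - (\<Sum>k\<in>S. b0 k * W k x)"
proof -
  define F where "F = (\<lambda>a b. \<integral>\<omega>. (Z \<omega> - a - (\<Sum>k\<in>S. b k * W k \<omega>))\<^sup>2 \<partial>M)"
  define r0 where "r0 = (\<lambda>x. Z x - a0 - (\<Sum>k\<in>S. b0 k * W k x))"
  define d where "d = (\<lambda>a b x. (a0 - a) + (\<Sum>k\<in>S. (b0 k - b k) * W k x))"
  have L0: "L2 M r0" unfolding r0_def by (intro L2_lin S W Z)
  have Ld: "\<And>a b. L2 M (d a b)" unfolding d_def by (intro L2_aff S W)
  have quad: "F a b = F a0 b0 + (\<integral>x. (d a b x)\<^sup>2 \<partial>M)" for a b
  proof -
    have pw: "(\<lambda>x. (Z x - a - (\<Sum>k\<in>S. b k * W k x))\<^sup>2) = (\<lambda>x. (r0 x)\<^sup>2 + 2 * (r0 x * d a b x) + (d a b x)\<^sup>2)"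
    proof
      fix x
      have "Z x - a - (\<Sum>k\<in>S. b k * W k x) = r0 x + d a b x"
        by (simp add: r0_def d_def algebra_simps sum_subtractf)
      then show "(Z x - a - (\<Sum>k\<in>S. b k * W k x))\<^sup>2 = (r0 x)\<^sup>2 + 2 * (r0 x * d a b x) + (d a b x)\<^sup>2"
        by (simp add: power2_eq_square algebra_simps)
    qed
    have i1: "integrable M (\<lambda>x. (r0 x)\<^sup>2)" "integrable M (\<lambda>x. (d a b x)\<^sup>2)"
      using L0 Ld L2_sqint by auto
    have i2: "integrable M (\<lambda>x. 2 * (r0 x * d a b x))" using L2_mult[OF L0 Ld] by simp
    have z: "(\<integral>x. r0 x * d a b x \<partial>M) = 0"
      unfolding d_def by (rule orth_aff[OF S W L0 o[folded r0_def]])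
    have "F a b = (\<integral>x. (r0 x)\<^sup>2 \<partial>M) + (\<integral>x. (d a b x)\<^sup>2 \<partial>M)"
      unfolding F_def pw using i1 i2 z by simp
    moreover have "F a0 b0 = (\<integral>x. (r0 x)\<^sup>2 \<partial>M)" by (simp add: F_def r0_def)
    ultimately show ?thesis by simp
  qed
  define P where "P = (\<lambda>(a, b). \<forall>a' b'.
              (\<integral>\<omega>. (Z \<omega> - a - (\<Sum>k\<in>S. b k * W k \<omega>))\<^sup>2 \<partial>M)
              \<le> (\<integral>\<omega>. (Z \<omega> - a' - (\<Sum>k\<in>S. b' k * W k \<omega>))\<^sup>2 \<partial>M))"
  have "\<forall>a' b'. F a0 b0 \<le> F a' b'"
  proof (intro allI)
    fix a' b'
    have "0 \<le> (\<integral>x. (d a' b' x)\<^sup>2 \<partial>M)" by (simp add: integral_nonneg_AE)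
    then show "F a0 b0 \<le> F a' b'" using quad[of a' b'] by linarith
  qed
  hence P0: "P (a0, b0)" unfolding P_def F_def by simp
  define ab where "ab = Eps P"
  have Pab: "P ab" unfolding ab_def by (rule someI[of P, OF P0])
  have LR: "lin_resid M Z W S = (\<lambda>x. Z x - fst ab - (\<Sum>k\<in>S. snd ab k * W k x))"
    unfolding lin_resid_def Let_def ab_def P_def by simp
  have "\<forall>a' b'. F (fst ab) (snd ab) \<le> F a' b'"
    using Pab unfolding P_def F_def by (cases ab) auto
  hence "F (fst ab) (snd ab) \<le> F a0 b0" by blast
  hence "(\<integral>x. (d (fst ab) (snd ab) x)\<^sup>2 \<partial>M) \<le> 0" using quad[of "fst ab" "snd ab"] by linarith
  moreover have "(\<integral>x. (d (fst ab) (snd ab) x)\<^sup>2 \<partial>M) \<ge> 0" by (simp add: integral_nonneg_AE)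
  ultimately have "(\<integral>x. (d (fst ab) (snd ab) x)\<^sup>2 \<partial>M) = 0" by simp
  hence ae: "AE x in M. (d (fst ab) (snd ab) x)\<^sup>2 = 0"
    using integral_nonneg_eq_0_iff_AE[of M "\<lambda>x. (d (fst ab) (snd ab) x)\<^sup>2"] Ld L2_sqint by simp
  have eq: "\<And>x. lin_resid M Z W S x = r0 x + d (fst ab) (snd ab) x"
    by (simp add: LR r0_def d_def algebra_simps sum_subtractf)
  show ?thesis
  proof (rule AE_mp[OF ae], rule AE_I2, rule impI)
    fix x assume "(d (fst ab) (snd ab) x)\<^sup>2 = 0"
    then show "lin_resid M Z W S x = Z x - a0 - (\<Sum>k\<in>S. b0 k * W k x)"
      by (simp add: eq r0_def)
  qed
qed

lemma lin_resid_meas: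
  assumes S: "finite S" and W: "\<And>k. k \<in> S \<Longrightarrow> L2 M (W k)" and Z: "L2 M Z"
  shows "lin_resid M Z W S \<in> borel_measurable M"
  unfolding lin_resid_def Let_def by (rule L2_meas, intro L2_lin S W Z)

lemma covar_cong_AE:
  assumes "f \<in> borel_measurable M" "f' \<in> borel_measurable M" "g \<in> borel_measurable M" "g' \<in> borel_measurable M"
    "AE x in M. f x = f' x" "AE x in M. g x = g' x"
  shows "covar M f g = covar M f' g'"
proof -
  have e1: "(\<integral>x. f x \<partial>M) = (\<integral>x. f' x \<partial>M)" by (rule integral_cong_AE) (use assms in auto)
  have e2: "(\<integral>x. g x \<partial>M) = (\<integral>x. g' x \<partial>M)" by (rule integral_cong_AE) (use assms in auto)
  show ?thesis unfolding covar_def e1 e2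
    by (rule integral_cong_AE) (use assms in \<open>auto simp: borel_measurable_times borel_measurable_diff\<close>)
qed

lemma corr_cong_AE:
  assumes "f \<in> borel_measurable M" "f' \<in> borel_measurable M" "g \<in> borel_measurable M" "g' \<in> borel_measurable M"
    "AE x in M. f x = f' x" "AE x in M. g x = g' x"
  shows "corr M f g = corr M f' g'"
  unfolding corr_def using covar_cong_AE[OF assms] covar_cong_AE[OF assms(1,2,1,2,5,5)]
    covar_cong_AE[OF assms(3,4,3,4,6,6)] by simp

lemma pcor_char:
  assumes S: "finite S" and W: "\<And>k. k \<in> S \<Longrightarrow> L2 M (W k)" and Z1: "L2 M Z1" and Z2: "L2 M Z2"
    and o1: "orth M (\<lambda>x. Z1 x - a1 - (\<Sum>k\<in>S. b1 k * W k x)) W S"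
    and o2: "orth M (\<lambda>x. Z2 x - a2 - (\<Sum>k\<in>S. b2 k * W k x)) W S"
  shows "pcor M Z1 Z2 W S = corr M (\<lambda>x. Z1 x - a1 - (\<Sum>k\<in>S. b1 k * W k x)) (\<lambda>x. Z2 x - a2 - (\<Sum>k\<in>S. b2 k * W k x))"
  unfolding pcor_def
  by (rule corr_cong_AE[OF lin_resid_meas[OF S W Z1] _ lin_resid_meas[OF S W Z2] _
        resid_AE[OF S W Z1 o1] resid_AE[OF S W Z2 o2]])
     (auto intro: L2_meas L2_lin S W Z1 Z2)

lemma covar_mean0:
  assumes "(\<integral>x. U x \<partial>M) = 0" "(\<integral>x. V x \<partial>M) = 0"
  shows "covar M U V = (\<integral>x. U x * V x \<partial>M)"
  using assms by (simp add: covar_def)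

end



locale lm = prob_space M for M :: "'a measure" +
  fixes X :: "nat \<Rightarrow> 'a \<Rightarrow> real" and eps Y :: "'a \<Rightarrow> real"
    and p :: nat and \<delta> :: real and \<beta> :: "nat \<Rightarrow> real"
  assumes X_meas: "\<And>j. j \<in> {1..p} \<Longrightarrow> X j \<in> borel_measurable M"
    and X_sq: "\<And>j. j \<in> {1..p} \<Longrightarrow> integrable M (\<lambda>\<omega>. (X j \<omega>)\<^sup>2)"
    and pos_def: "\<And>c :: nat \<Rightarrow> real. (\<exists>j\<in>{1..p}. c j \<noteq> 0) \<Longrightarrow>
        (\<Sum>j\<in>{1..p}. \<Sum>k\<in>{1..p}. c j * c k * covar M (X j) (X k)) > 0"
    and eps_meas: "eps \<in> borel_measurable M"
    and eps_sq: "integrable M (\<lambda>\<omega>. (eps \<omega>)\<^sup>2)"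
    and eps_mean: "(\<integral>\<omega>. eps \<omega> \<partial>M) = 0"
    and eps_var: "covar M eps eps > 0"
    and uncorr: "\<And>j. j \<in> {1..p} \<Longrightarrow> covar M eps (X j) = 0"
    and Y_def: "\<And>\<omega>. Y \<omega> = \<delta> + (\<Sum>j\<in>{1..p}. \<beta> j * X j \<omega>) + eps \<omega>"
begin

abbreviation "P \<equiv> {1..p}"

lemma LX: "k \<in> P \<Longrightarrow> L2 M (X k)" using X_meas X_sq by (simp add: L2_def)
lemma LXS: "S \<subseteq> P \<Longrightarrow> k \<in> S \<Longrightarrow> L2 M (X k)" using LX by auto
lemma finS: "S \<subseteq> P \<Longrightarrow> finite S" using finite_subset by blast
lemma Leps: "L2 M eps" using eps_meas eps_sq by (simp add: L2_def)
lemma Yfun: "Y = (\<lambda>\<omega>. \<delta> + (\<Sum>j\<in>P. \<beta> j * X j \<omega>) + eps \<omega>)" using Y_def by auto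
lemma LY: "L2 M Y" unfolding Yfun by (intro L2_add L2_const L2_sum L2_cmult LX Leps) auto

lemma epsX: "k \<in> P \<Longrightarrow> (\<integral>x. eps x * X k x \<partial>M) = 0"
proof -
  assume k: "k \<in> P"
  have "covar M eps (X k) = (\<integral>x. eps x * X k x - (\<integral>x. X k x \<partial>M) * eps x \<partial>M)"
    unfolding covar_def eps_mean by (simp add: algebra_simps)
  also have "\<dots> = (\<integral>x. eps x * X k x \<partial>M) - (\<integral>x. X k x \<partial>M) * 0"
    using L2_mult[OF Leps LX[OF k]] L2_int[OF Leps] eps_mean by simp
  finally show ?thesis using uncorr[OF k] by simp
qed

lemma eps_lin: assumes "S \<subseteq> P" "j \<in> P"
  shows "(\<integral>x. eps x * (X j x - a - (\<Sum>k\<in>S. b k * X k x)) \<partial>M) = 0"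
proof -
  have "(\<Sum>k\<in>S. b k * (\<integral>x. eps x * X k x \<partial>M)) = 0"
    by (rule sum.neutral) (use assms epsX in auto)
  then show ?thesis
    using int_lin[where W=X, OF finS[OF assms(1)] LXS[OF assms(1)] Leps LX[OF assms(2)]] assms
      epsX eps_mean by auto
qed

lemma orth_eps: "S \<subseteq> P \<Longrightarrow> orth M eps X S"
  using epsX eps_mean by (auto simp: orth_def)

definition "Aset = {j\<in>P. \<beta> j \<noteq> 0}"

lemma pcor_zero:
  assumes AS: "Aset \<subseteq> S" and SP: "S \<subseteq> P" and j: "j \<in> P"
  shows "pcor M Y (X j) X S = 0"
proof -
  obtain a b where o: "orth M (\<lambda>x. X j x - a - (\<Sum>k\<in>S. b k * X k x)) X S"
    using orth_exists[where W=X, OF finS[OF SP] LXS[OF SP] LX[OF j]] by blast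
  have pw: "(\<lambda>x. Y x - \<delta> - (\<Sum>k\<in>S. \<beta> k * X k x)) = eps"
  proof
    fix x
    have "(\<Sum>k\<in>P. \<beta> k * X k x) = (\<Sum>k\<in>S. \<beta> k * X k x)"
      by (rule sum.mono_neutral_right) (use SP AS in \<open>auto simp: Aset_def\<close>)
    then show "Y x - \<delta> - (\<Sum>k\<in>S. \<beta> k * X k x) = eps x" by (simp add: Y_def)
  qed
  have oY: "orth M (\<lambda>x. Y x - \<delta> - (\<Sum>k\<in>S. \<beta> k * X k x)) X S"
    unfolding pw using orth_eps[OF SP] .
  have "pcor M Y (X j) X S = corr M eps (\<lambda>x. X j x - a - (\<Sum>k\<in>S. b k * X k x))"
    using pcor_char[where W=X, OF finS[OF SP] LXS[OF SP] LY LX[OF j] oY o] unfolding pw .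
  also have "covar M eps (\<lambda>x. X j x - a - (\<Sum>k\<in>S. b k * X k x)) = 0"
    using covar_mean0[of eps "\<lambda>x. X j x - a - (\<Sum>k\<in>S. b k * X k x)"] o eps_mean
      eps_lin[OF SP j] by (simp add: orth_def)
  hence "corr M eps (\<lambda>x. X j x - a - (\<Sum>k\<in>S. b k * X k x)) = 0" by (simp add: corr_def)
  finally show ?thesis .
qed

end



context lm begin

lemma quad_form:
  "(\<integral>x. (\<Sum>k\<in>P. c k * (X k x - (\<integral>y. X k y \<partial>M)))\<^sup>2 \<partial>M)
   = (\<Sum>i\<in>P. \<Sum>k\<in>P. c i * c k * covar M (X i) (X k))"
proof -
  define Xt where "Xt = (\<lambda>k x. X k x - (\<integral>y. X k y \<partial>M))"
  have LXt: "k \<in> P \<Longrightarrow> L2 M (Xt k)" for k unfolding Xt_def by (intro L2_diff LX L2_const)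
  have "(\<lambda>x. (\<Sum>k\<in>P. c k * Xt k x)\<^sup>2) = (\<lambda>x. \<Sum>i\<in>P. \<Sum>k\<in>P. c i * c k * (Xt i x * Xt k x))"
    by (simp add: power2_eq_square sum_product algebra_simps)
  then have "(\<integral>x. (\<Sum>k\<in>P. c k * Xt k x)\<^sup>2 \<partial>M) = (\<integral>x. (\<Sum>i\<in>P. \<Sum>k\<in>P. c i * c k * (Xt i x * Xt k x)) \<partial>M)"
    by simp
  also have "\<dots> = (\<Sum>i\<in>P. \<Sum>k\<in>P. c i * c k * (\<integral>x. Xt i x * Xt k x \<partial>M))"
  proof -
    have ii: "i \<in> P \<Longrightarrow> k \<in> P \<Longrightarrow> integrable M (\<lambda>x. c i * c k * (Xt i x * Xt k x))" for i k
      using L2_mult[OF LXt LXt] by simp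
    have "(\<integral>x. (\<Sum>i\<in>P. \<Sum>k\<in>P. c i * c k * (Xt i x * Xt k x)) \<partial>M)
        = (\<Sum>i\<in>P. (\<integral>x. (\<Sum>k\<in>P. c i * c k * (Xt i x * Xt k x)) \<partial>M))"
      by (rule Bochner_Integration.integral_sum) (use ii in auto)
    also have "\<dots> = (\<Sum>i\<in>P. \<Sum>k\<in>P. (\<integral>x. c i * c k * (Xt i x * Xt k x) \<partial>M))"
      by (rule sum.cong[OF refl], rule Bochner_Integration.integral_sum) (use ii in auto)
    finally show ?thesis by simp
  qed
  also have "\<dots> = (\<Sum>i\<in>P. \<Sum>k\<in>P. c i * c k * covar M (X i) (X k))"
    by (simp add: covar_def Xt_def)
  finally show ?thesis by (simp add: Xt_def)
qed

lemma resid_var_pos: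
  assumes j: "j \<in> P"
    and m0: "(\<integral>x. X j x - a - (\<Sum>k\<in>P - {j}. b k * X k x) \<partial>M) = 0"
  shows "(\<integral>x. (X j x - a - (\<Sum>k\<in>P - {j}. b k * X k x))\<^sup>2 \<partial>M) > 0"
proof -
  define S where "S = P - {j}"
  have SP: "S \<subseteq> P" and PS: "P = insert j S" and jS: "j \<notin> S" and fS: "finite S"
    using j by (auto simp: S_def)
  define m where "m = (\<lambda>k. \<integral>y. X k y \<partial>M)"
  define c where "c = (\<lambda>k. if k = j then 1 else - b k)"
  define \<kappa> where "\<kappa> = m j - a - (\<Sum>k\<in>S. b k * m k)"
  have pw: "X j x - a - (\<Sum>k\<in>S. b k * X k x) = (\<Sum>k\<in>P. c k * (X k x - m k)) + \<kappa>" for x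
  proof -
    have "(\<Sum>k\<in>P. c k * (X k x - m k)) = (X j x - m j) + (\<Sum>k\<in>S. - b k * (X k x - m k))"
      unfolding PS using jS fS by (simp add: c_def) (intro sum.cong, auto)
    also have "(\<Sum>k\<in>S. - b k * (X k x - m k)) = (\<Sum>k\<in>S. b k * m k) - (\<Sum>k\<in>S. b k * X k x)"
      by (simp add: algebra_simps sum_subtractf)
    finally show ?thesis by (simp add: \<kappa>_def)
  qed
  have "(\<integral>x. 1 * (X j x - a - (\<Sum>k\<in>S. b k * X k x)) \<partial>M)
     = (\<integral>x. 1 * X j x \<partial>M) - a * (\<integral>x. 1 \<partial>M) - (\<Sum>k\<in>S. b k * (\<integral>x. 1 * X k x \<partial>M))"
    by (rule int_lin[where W=X, OF fS LXS[OF SP] L2_const LX[OF j]])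
  hence "\<kappa> = 0" using m0 by (simp add: \<kappa>_def m_def S_def prob_space)
  hence eq: "(\<lambda>x. (X j x - a - (\<Sum>k\<in>S. b k * X k x))\<^sup>2) = (\<lambda>x. (\<Sum>k\<in>P. c k * (X k x - m k))\<^sup>2)"
    using pw by simp
  have "(\<exists>i\<in>P. c i \<noteq> 0)" using j by (auto simp: c_def)
  from pos_def[OF this] quad_form[of c] eq show ?thesis by (simp add: S_def m_def)
qed

lemma pcor_nonzero:
  assumes jA: "j \<in> Aset"
  shows "pcor M Y (X j) X (P - {j}) \<noteq> 0"
proof -
  define S where "S = P - {j}"
  have j: "j \<in> P" and bj: "\<beta> j \<noteq> 0" using jA by (auto simp: Aset_def)
  have SP: "S \<subseteq> P" and PS: "P = insert j S" and jS: "j \<notin> S" and fS: "finite S"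
    using j by (auto simp: S_def)
  obtain a b where o: "orth M (\<lambda>x. X j x - a - (\<Sum>k\<in>S. b k * X k x)) X S"
    using orth_exists[where W=X, OF fS LXS[OF SP] LX[OF j]] by blast
  define r where "r = (\<lambda>x. X j x - a - (\<Sum>k\<in>S. b k * X k x))"
  have Lr: "L2 M r" unfolding r_def by (intro L2_lin fS LXS[OF SP] LX[OF j])
  have or: "orth M r X S" using o by (simp add: r_def)
  define a' where "a' = \<delta> + \<beta> j * a"
  define b' where "b' = (\<lambda>k. \<beta> k + \<beta> j * b k)"
  have pw: "(\<lambda>x. Y x - a' - (\<Sum>k\<in>S. b' k * X k x)) = (\<lambda>x. \<beta> j * r x + eps x)"
  proof
    fix x
    have "(\<Sum>k\<in>P. \<beta> k * X k x) = \<beta> j * X j x + (\<Sum>k\<in>S. \<beta> k * X k x)"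
      unfolding PS using jS fS by simp
    moreover have "(\<Sum>k\<in>S. b' k * X k x) = (\<Sum>k\<in>S. \<beta> k * X k x) + \<beta> j * (\<Sum>k\<in>S. b k * X k x)"
      by (simp add: b'_def algebra_simps sum.distrib sum_distrib_left)
    ultimately show "Y x - a' - (\<Sum>k\<in>S. b' k * X k x) = \<beta> j * r x + eps x"
      by (simp add: Y_def r_def a'_def algebra_simps)
  qed
  have ir: "integrable M r" using Lr L2_int by auto
  have ieps: "integrable M eps" using Leps L2_int by auto
  have er: "(\<integral>x. eps x * r x \<partial>M) = 0" unfolding r_def by (rule eps_lin[OF SP j])
  have r0: "(\<integral>x. r x \<partial>M) = 0" using or by (simp add: orth_def)
  have orY: "orth M (\<lambda>x. \<beta> j * r x + eps x) X S"
  proof -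
    have "(\<integral>x. \<beta> j * r x + eps x \<partial>M) = 0" using ir ieps r0 eps_mean by simp
    moreover have "(\<integral>x. (\<beta> j * r x + eps x) * X i x \<partial>M) = 0" if i: "i \<in> S" for i
    proof -
      have "(\<lambda>x. (\<beta> j * r x + eps x) * X i x) = (\<lambda>x. \<beta> j * (r x * X i x) + eps x * X i x)"
        by (simp add: algebra_simps)
      moreover have "integrable M (\<lambda>x. r x * X i x)" "integrable M (\<lambda>x. eps x * X i x)"
        using L2_mult Lr Leps LXS[OF SP i] by auto
      ultimately show ?thesis using or i epsX SP by (auto simp: orth_def)
    qed
    ultimately show ?thesis by (simp add: orth_def)
  qed
  have oY: "orth M (\<lambda>x. Y x - a' - (\<Sum>k\<in>S. b' k * X k x)) X S" unfolding pw by (rule orY)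
  have pc: "pcor M Y (X j) X S = corr M (\<lambda>x. \<beta> j * r x + eps x) r"
    using pcor_char[where W=X, OF fS LXS[OF SP] LY LX[OF j] oY o] unfolding pw r_def .
  define v where "v = (\<integral>x. (r x)\<^sup>2 \<partial>M)"
  have vpos: "v > 0" unfolding v_def r_def S_def
    by (rule resid_var_pos[OF j]) (use r0 in \<open>simp add: r_def S_def\<close>)
  have iYr: "integrable M (\<lambda>x. r x * r x)" "integrable M (\<lambda>x. eps x * r x)"
    using L2_mult Lr Leps by auto
  have m1: "(\<integral>x. \<beta> j * r x + eps x \<partial>M) = 0" using orY by (simp add: orth_def)
  have c1: "covar M (\<lambda>x. \<beta> j * r x + eps x) r = \<beta> j * v"
  proof -
    have "covar M (\<lambda>x. \<beta> j * r x + eps x) r = (\<integral>x. (\<beta> j * r x + eps x) * r x \<partial>M)"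
      by (rule covar_mean0[OF m1 r0])
    also have "(\<lambda>x. (\<beta> j * r x + eps x) * r x) = (\<lambda>x. \<beta> j * (r x * r x) + eps x * r x)"
      by (simp add: algebra_simps)
    finally show ?thesis using iYr er by (simp add: v_def power2_eq_square)
  qed
  have c2: "covar M r r = v" by (simp add: covar_mean0[OF r0 r0] v_def power2_eq_square)
  have c3: "covar M (\<lambda>x. \<beta> j * r x + eps x) (\<lambda>x. \<beta> j * r x + eps x) > 0"
  proof -
    have "covar M (\<lambda>x. \<beta> j * r x + eps x) (\<lambda>x. \<beta> j * r x + eps x)
        = (\<integral>x. (\<beta> j * r x + eps x) * (\<beta> j * r x + eps x) \<partial>M)"
      by (rule covar_mean0[OF m1 m1])
    also have "(\<lambda>x. (\<beta> j * r x + eps x) * (\<beta> j * r x + eps x))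
       = (\<lambda>x. (\<beta> j * \<beta> j) * (r x * r x) + (2 * \<beta> j) * (eps x * r x) + eps x * eps x)"
      by (simp add: algebra_simps)
    also have "(\<integral>x. (\<beta> j * \<beta> j) * (r x * r x) + (2 * \<beta> j) * (eps x * r x) + eps x * eps x \<partial>M)
       = (\<beta> j * \<beta> j) * v + (2 * \<beta> j) * 0 + covar M eps eps"
      using iYr er L2_mult[OF Leps Leps] covar_mean0[OF eps_mean eps_mean]
      by (simp add: v_def power2_eq_square)
    finally show ?thesis using vpos eps_var
      by (simp add: add_nonneg_pos)
  qed
  have "corr M (\<lambda>x. \<beta> j * r x + eps x) r \<noteq> 0"
    unfolding corr_def c1 c2 using bj vpos c3 by simp
  then show ?thesis using pc by (simp add: S_def)
qed

end



context prob_space begin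
lemma pcor_empty:
  assumes Z1: "L2 M Z1" and Z2: "L2 M Z2"
  shows "pcor M Z1 Z2 W {} = corr M Z1 Z2"
proof -
  have o1: "orth M (\<lambda>x. Z1 x - (\<integral>x. Z1 x \<partial>M) - (\<Sum>k\<in>{}. (\<lambda>_. 0) k * W k x)) W {}"
    using L2_int[OF Z1] by (simp add: orth_def prob_space)
  have o2: "orth M (\<lambda>x. Z2 x - (\<integral>x. Z2 x \<partial>M) - (\<Sum>k\<in>{}. (\<lambda>_. 0) k * W k x)) W {}"
    using L2_int[OF Z2] by (simp add: orth_def prob_space)
  have "pcor M Z1 Z2 W {} = corr M (\<lambda>x. Z1 x - (\<integral>x. Z1 x \<partial>M) - (\<Sum>k\<in>{}. (\<lambda>_. 0) k * W k x))
       (\<lambda>x. Z2 x - (\<integral>x. Z2 x \<partial>M) - (\<Sum>k\<in>{}. (\<lambda>_. 0) k * W k x))"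
    by (rule pcor_char[OF _ _ Z1 Z2 o1 o2]) auto
  also have "\<dots> = corr M Z1 Z2"
    using L2_int[OF Z1] L2_int[OF Z2] by (simp add: corr_def covar_def prob_space)
  finally show ?thesis .
qed
end

context lm begin

lemma corr_pcor: "j \<in> P \<Longrightarrow> corr M Y (X j) = pcor M Y (X j) X {}"
  using pcor_empty[OF LY LX] by simp

lemma pcA_sub: "pc_A M Y X p (Suc m) \<subseteq> P"
  by (induction m) auto

lemma A_sub: "Aset \<subseteq> P" by (auto simp: Aset_def)

lemma A_in:
  assumes faithful: "partially_faithful M Y X p"
  shows "Aset \<subseteq> pc_A M Y X p (Suc m)"
proof (induction m)
  case 0
  show ?case
  proof
    fix j assume jA: "j \<in> Aset"
    hence j: "j \<in> P" using A_sub by auto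
    have "pcor M Y (X j) X {} \<noteq> 0"
    proof
      assume "pcor M Y (X j) X {} = 0"
      hence "pcor M Y (X j) X (P - {j}) = 0" using faithful j
        unfolding partially_faithful_def by blast
      with pcor_nonzero[OF jA] show False by simp
    qed
    then show "j \<in> pc_A M Y X p (Suc 0)" using j corr_pcor[OF j] by simp
  qed
next
  case (Suc m)
  show ?case
  proof
    fix j assume jA: "j \<in> Aset"
    hence j: "j \<in> P" using A_sub by auto
    have "pcor M Y (X j) X S \<noteq> 0" if "S \<subseteq> pc_A M Y X p (Suc m) - {j}" for S
    proof
      assume "pcor M Y (X j) X S = 0"
      moreover have "S \<subseteq> P - {j}" using that pcA_sub by blast
      ultimately have "pcor M Y (X j) X (P - {j}) = 0" using faithful j
        unfolding partially_faithful_def by blast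
      with pcor_nonzero[OF jA] show False by simp
    qed
    then show "j \<in> pc_A M Y X p (Suc (Suc m))" using jA Suc by auto
  qed
qed

lemma A_reached:
  assumes faithful: "partially_faithful M Y X p"
  shows "pc_A M Y X p (Suc (card Aset)) = Aset"
proof (cases "card Aset")
  case 0
  hence A0: "Aset = {}" using finite_subset[OF A_sub] by auto
  have "corr M Y (X j) = 0" if "j \<in> P" for j
    using corr_pcor[OF that] pcor_zero[of "{}" j] A0 that by simp
  then show ?thesis using 0 A0 by auto
next
  case (Suc n)
  show ?thesis
  proof
    show "Aset \<subseteq> pc_A M Y X p (Suc (card Aset))" by (rule A_in[OF faithful])
    show "pc_A M Y X p (Suc (card Aset)) \<subseteq> Aset"
    proof
      fix j assume jin: "j \<in> pc_A M Y X p (Suc (card Aset))"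
      show "j \<in> Aset"
      proof (rule ccontr)
        assume jA: "j \<notin> Aset"
        have jn: "j \<in> pc_A M Y X p (Suc n)" and
          all: "\<forall>S. S \<subseteq> pc_A M Y X p (Suc n) - {j} \<and> card S = Suc n \<longrightarrow> pcor M Y (X j) X S \<noteq> 0"
          using jin Suc by auto
        have j: "j \<in> P" using jn pcA_sub[of n] by blast
        have "Aset \<subseteq> pc_A M Y X p (Suc n) - {j}" using A_in[OF faithful] jA by blast
        with all Suc have "pcor M Y (X j) X Aset \<noteq> 0" by auto
        with pcor_zero[OF subset_refl A_sub j] show False by simp
      qed
    qed
  qed
qed

lemma main:
  assumes faithful: "partially_faithful M Y X p"
  shows "pc_A M Y X p (m_reach M Y X p) = {j\<in>P. \<beta> j \<noteq> 0}"
proof -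
  let ?n = "card Aset"
  let ?Q = "\<lambda>m. 1 \<le> m \<and> card (pc_A M Y X p m) \<le> m"
  have Qn: "?Q (Suc ?n)" using A_reached[OF faithful] by simp
  define mr where "mr = m_reach M Y X p"
  have Qm: "?Q mr" unfolding mr_def m_reach_def by (rule LeastI[of ?Q, OF Qn])
  have le: "mr \<le> Suc ?n" unfolding mr_def m_reach_def by (rule Least_le[of ?Q, OF Qn])
  have "pc_A M Y X p mr = Aset"
  proof (cases "mr = Suc ?n")
    case True
    then show ?thesis using A_reached[OF faithful] by simp
  next
    case False
    hence mn: "mr \<le> ?n" using le by simp
    obtain k where k: "mr = Suc k" using Qm by (cases mr) auto
    have sub: "Aset \<subseteq> pc_A M Y X p mr" using A_in[OF faithful] k by simp
    have fin: "finite (pc_A M Y X p mr)" using pcA_sub[of k] k finite_subset by auto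
    have "?n \<le> card (pc_A M Y X p mr)" by (rule card_mono[OF fin sub])
    hence "card Aset = card (pc_A M Y X p mr)" using Qm mn by simp
    then show ?thesis using card_subset_eq[OF fin sub] by simp
  qed
  then show ?thesis by (simp add: mr_def Aset_def)
qed

end

theorem theorem3:
  fixes M :: "'a measure" and X :: "nat \<Rightarrow> 'a \<Rightarrow> real" and eps Y :: "'a \<Rightarrow> real"
    and p :: nat and \<delta> :: real and \<beta> :: "nat \<Rightarrow> real"
  assumes "prob_space M"
    and X_meas: "\<And>j. j \<in> {1..p} \<Longrightarrow> X j \<in> borel_measurable M"
    and X_sq: "\<And>j. j \<in> {1..p} \<Longrightarrow> integrable M (\<lambda>\<omega>. (X j \<omega>)\<^sup>2)"
    and pos_def: "\<And>c :: nat \<Rightarrow> real. (\<exists>j\<in>{1..p}. c j \<noteq> 0) \<Longrightarrow>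
        (\<Sum>j\<in>{1..p}. \<Sum>k\<in>{1..p}. c j * c k * covar M (X j) (X k)) > 0"
    and eps_meas: "eps \<in> borel_measurable M"
    and eps_sq: "integrable M (\<lambda>\<omega>. (eps \<omega>)\<^sup>2)"
    and eps_mean: "(\<integral>\<omega>. eps \<omega> \<partial>M) = 0"
    and eps_var: "covar M eps eps > 0"
    and uncorr: "\<And>j. j \<in> {1..p} \<Longrightarrow> covar M eps (X j) = 0"
    and Y_def: "\<And>\<omega>. Y \<omega> = \<delta> + (\<Sum>j\<in>{1..p}. \<beta> j * X j \<omega>) + eps \<omega>"
    and faithful: "partially_faithful M Y X p"
  shows "pc_A M Y X p (m_reach M Y X p) = {j\<in>{1..p}. \<beta> j \<noteq> 0}"
  proof -
  interpret lm M X eps Y p \<delta> \<beta>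
    by (intro lm.intro lm_axioms.intro) (fact assms)+
  show ?thesis by (rule main[OF faithful])
qed

end
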